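(* Let $G$ be a finite simple undirected graph with adjacency matrix $A$, and let $a,b$ be vertices of $G$. Then the closure in $\mathbb{C}$ of the set $\{\exp(\mathrm{i}tA)_{a,b} : t\ge 0\}$ is invariant under complex conjugation. *)

theory Defs
  imports "HOL-Analysis.Analysis"
begin

definition simple_graph :: "('n::finite \<Rightarrow> 'n \<Rightarrow> bool) \<Rightarrow> bool" where
  "simple_graph E \<longleftrightarrow> (\<forall>x y. E x y \<longleftrightarrow> E y x) \<and> (\<forall>x. \<not> E x x)"

definition adj_matrix :: "('n::finite \<Rightarrow> 'n \<Rightarrow> bool) \<Rightarrow> complex^'n^'n" where
  "adj_matrix E = (\<chi> i j. if E i j then 1 else 0)"

primrec matpow :: "'a::semiring_1^'n::finite^'n \<Rightarrow> nat \<Rightarrow> 'a^'n^'n" where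
  "matpow M 0 = mat 1"
| "matpow M (Suc k) = M ** matpow M k"

definition mat_exp :: "complex^'n::finite^'n \<Rightarrow> complex^'n^'n" where
  "mat_exp M = (\<chi> i j. \<Sum>k. matpow M k $ i $ j / of_nat (fact k))"

definition mat_scale :: "complex \<Rightarrow> complex^'n::finite^'n \<Rightarrow> complex^'n^'n" where
  "mat_scale c M = (\<chi> i j. c * M $ i $ j)"

end

theory Submission
  imports Defs
begin

lemma matpow_add: "matpow M (k + m) = matpow M k ** matpow M m"
  by (induction k) (simp_all add: matrix_mul_assoc)

lemma matpow_scale: "matpow (mat_scale c M) k = mat_scale (c^k) (matpow M k)"
proof (induction k)
  case 0
  show ?case by (simp add: mat_scale_def mat_def vec_eq_iff)
next
  case (Suc k)
  then show ?case
    by (simp add: mat_scale_def matrix_matrix_mult_def vec_eq_iff sum_distrib_left mult_ac)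
qed

definition Ser :: "complex \<Rightarrow> nat \<Rightarrow> complex" where
  "Ser z k = z^k /\<^sub>R fact k"

definition G :: "complex^'n::finite^'n \<Rightarrow> complex \<Rightarrow> 'n \<Rightarrow> 'n \<Rightarrow> complex" where
  "G M z i j = (\<Sum>k. Ser z k * matpow M k $ i $ j)"

lemma mat_exp_G: "mat_exp (mat_scale c M) $ i $ j = G M c i j"
  unfolding mat_exp_def G_def Ser_def matpow_scale
  by (simp add: mat_scale_def scaleR_conv_of_real divide_inverse mult_ac)

lemma matpow_bound:
  fixes M :: "complex^'n::finite^'n"
  assumes "\<And>i j. norm (M $ i $ j) \<le> 1"
  shows "norm (matpow M k $ i $ j) \<le> real CARD('n)^k"
proof (induction k arbitrary: i j)
  case 0
  show ?case by (simp add: mat_def)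
next
  case (Suc k)
  have "norm (matpow M (Suc k) $ i $ j) = norm (\<Sum>l\<in>UNIV. M $ i $ l * matpow M k $ l $ j)"
    by (simp add: matrix_matrix_mult_def)
  also have "\<dots> \<le> (\<Sum>l\<in>(UNIV::'n set). norm (M $ i $ l * matpow M k $ l $ j))"
    by (rule norm_sum)
  also have "\<dots> \<le> (\<Sum>l\<in>(UNIV::'n set). real CARD('n)^k)"
    apply (rule sum_mono)
    apply (simp add: norm_mult)
    using mult_mono[OF assms Suc.IH] by simp
  also have "\<dots> = real CARD('n)^Suc k" by simp
  finally show ?case .
qed

lemma summable_term:
  assumes "\<And>i j. norm (M $ i $ j) \<le> 1"
  shows "summable (\<lambda>k. norm (Ser z k * matpow M k $ i $ (j::'n::finite)))"
proof (rule summable_comparison_test)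
  let ?C = "real CARD('n)"
  show "summable (\<lambda>k. inverse (fact k) * (norm z * ?C)^k)"
    by (rule summable_exp)
  show "\<exists>N. \<forall>n\<ge>N. norm (norm (Ser z n * matpow M n $ i $ j)) \<le> inverse (fact n) * (norm z * ?C)^n"
  proof (intro exI allI impI)
    fix n
    have "norm (Ser z n * matpow M n $ i $ j) = norm z ^ n / fact n * norm (matpow M n $ i $ j)"
      by (simp add: Ser_def norm_mult norm_power field_simps)
    also have "\<dots> \<le> norm z ^ n / fact n * ?C ^ n"
      by (intro mult_left_mono matpow_bound assms) auto
    also have "\<dots> = inverse (fact n) * (norm z * ?C)^n"
      by (simp add: power_mult_distrib divide_inverse mult_ac)
    finally show "norm (norm (Ser z n * matpow M n $ i $ j)) \<le> inverse (fact n) * (norm z * ?C)^n"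
      by simp
  qed
qed

lemma G_add:
  assumes "\<And>i j. norm (M $ i $ j) \<le> 1"
  shows "(\<Sum>l\<in>UNIV. G M s i l * G M t l j) = G M (s + t) i (j::'n::finite)"
proof -
  have "(\<Sum>l\<in>UNIV. G M s i l * G M t l j)
      = (\<Sum>l\<in>UNIV. \<Sum>n. \<Sum>k\<le>n. (Ser s k * matpow M k $ i $ l) * (Ser t (n-k) * matpow M (n-k) $ l $ j))"
    unfolding G_def
    by (intro sum.cong refl Cauchy_product summable_term assms)
  also have "\<dots> = (\<Sum>n. \<Sum>l\<in>UNIV. \<Sum>k\<le>n. (Ser s k * matpow M k $ i $ l) * (Ser t (n-k) * matpow M (n-k) $ l $ j))"
    by (intro suminf_sum[symmetric] summable_Cauchy_product summable_term assms)
  also have "\<dots> = (\<Sum>n. Ser (s + t) n * matpow M n $ i $ j)"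
  proof (rule suminf_cong)
    fix n
    have "(\<Sum>l\<in>UNIV. \<Sum>k\<le>n. (Ser s k * matpow M k $ i $ l) * (Ser t (n-k) * matpow M (n-k) $ l $ j))
        = (\<Sum>k\<le>n. Ser s k * Ser t (n-k) * (\<Sum>l\<in>UNIV. matpow M k $ i $ l * matpow M (n-k) $ l $ j))"
      by (subst sum.swap) (simp add: sum_distrib_left mult_ac)
    also have "\<dots> = (\<Sum>k\<le>n. Ser s k * Ser t (n-k) * matpow M n $ i $ j)"
    proof (rule sum.cong[OF refl])
      fix k assume "k \<in> {..n}"
      then have "matpow M n = matpow M k ** matpow M (n-k)"
        using matpow_add[of M k "n-k"] by simp
      then show "Ser s k * Ser t (n-k) * (\<Sum>l\<in>UNIV. matpow M k $ i $ l * matpow M (n-k) $ l $ j)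
          = Ser s k * Ser t (n-k) * matpow M n $ i $ j"
        by (simp add: matrix_matrix_mult_def)
    qed
    also have "\<dots> = matpow M n $ i $ j * (\<Sum>k\<le>n. Ser s k * Ser t (n-k))"
      by (simp add: sum_distrib_left mult_ac)
    also have "(\<Sum>k\<le>n. Ser s k * Ser t (n-k)) = Ser (s + t) n"
      unfolding Ser_def by (rule exp_series_add_commuting[symmetric]) (simp add: mult.commute)
    also have "matpow M n $ i $ j * Ser (s + t) n = Ser (s + t) n * matpow M n $ i $ j"
      by (simp add: mult.commute)
    finally show "(\<Sum>l\<in>UNIV. \<Sum>k\<le>n. (Ser s k * matpow M k $ i $ l) * (Ser t (n-k) * matpow M (n-k) $ l $ j))
        = Ser (s + t) n * matpow M n $ i $ j" .
  qed
  finally show ?thesis unfolding G_def .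
qed

lemma G_zero: "G M 0 i j = (if i = j then 1 else 0)"
proof -
  have "G M 0 i j = (\<Sum>k. (matpow M k $ i $ j /\<^sub>R fact k) * 0^k)"
    unfolding G_def Ser_def by (intro suminf_cong) (simp add: mult.commute)
  also have "\<dots> = matpow M 0 $ i $ j /\<^sub>R fact 0" by (rule powser_zero)
  also have "\<dots> = (if i = j then 1 else 0)" by (simp add: mat_def)
  finally show ?thesis .
qed


lemma cnj_matpow:
  assumes "\<And>i j. cnj (M $ i $ j) = M $ i $ j"
  shows "cnj (matpow M k $ i $ j) = matpow M k $ i $ j"
proof (induction k arbitrary: i j)
  case 0 show ?case by (simp add: mat_def)
next
  case (Suc k) then show ?case by (simp add: matrix_matrix_mult_def assms)
qed

lemma sym_matpow:
  fixes M :: "complex^'n::finite^'n"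
  assumes "\<And>i j. M $ i $ j = M $ j $ i"
  shows "matpow M k $ i $ j = matpow M k $ j $ i"
proof (induction k arbitrary: i j)
  case 0 show ?case by (simp add: mat_def)
next
  case (Suc k)
  have "matpow M (Suc k) = matpow M k ** matpow M 1"
    using matpow_add[of M k 1] by simp
  then have e: "matpow M (Suc k) = matpow M k ** M" by simp
  have "matpow M (Suc k) $ i $ j = (\<Sum>l\<in>UNIV. M $ i $ l * matpow M k $ l $ j)"
    by (simp add: matrix_matrix_mult_def)
  also have "\<dots> = (\<Sum>l\<in>UNIV. matpow M k $ j $ l * M $ l $ i)"
  proof (intro sum.cong refl)
    fix l
    have "M $ i $ l * matpow M k $ l $ j = matpow M k $ l $ j * M $ i $ l" by (rule mult.commute)
    also have "\<dots> = matpow M k $ j $ l * M $ l $ i" using Suc.IH[of l j] assms[of i l] by simp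
    finally show "M $ i $ l * matpow M k $ l $ j = matpow M k $ j $ l * M $ l $ i" .
  qed
  also have "\<dots> = matpow M (Suc k) $ j $ i"
    by (subst e) (simp add: matrix_matrix_mult_def)
  finally show ?case .
qed

lemma G_cnj:
  assumes "\<And>i j. norm (M $ i $ j) \<le> 1" "\<And>i j. cnj (M $ i $ j) = M $ i $ j"
  shows "cnj (G M z i j) = G M (cnj z) i (j::'n::finite)"
proof -
  have "summable (\<lambda>k. Ser z k * matpow M k $ i $ j)"
    by (rule summable_norm_cancel) (rule summable_term[OF assms(1)])
  then have "(\<lambda>k. Ser z k * matpow M k $ i $ j) sums G M z i j"
    unfolding G_def by (rule summable_sums)
  then have "(\<lambda>k. cnj (Ser z k * matpow M k $ i $ j)) sums cnj (G M z i j)"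
    by (simp only: sums_cnj)
  moreover have "(\<lambda>k. cnj (Ser z k * matpow M k $ i $ j)) = (\<lambda>k. Ser (cnj z) k * matpow M k $ i $ j)"
    by (rule ext) (simp add: Ser_def cnj_matpow assms(2))
  ultimately show ?thesis unfolding G_def by (simp add: sums_iff)
qed

lemma G_sym:
  assumes "\<And>i j. M $ i $ j = M $ j $ i"
  shows "G M z i j = G M z j i"
  unfolding G_def by (simp add: sym_matpow[OF assms])

locale W_ctx =
  fixes M :: "complex^'n::finite^'n"
  assumes bnd: "\<And>i j. norm (M $ i $ j) \<le> 1"
    and real: "\<And>i j. cnj (M $ i $ j) = M $ i $ j"
    and sym: "\<And>i j. M $ i $ j = M $ j $ i"
begin

definition W :: "real \<Rightarrow> 'n \<Rightarrow> 'n \<Rightarrow> complex" where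
  "W t i j = G M (\<i> * complex_of_real t) i j"

lemma W_add: "(\<Sum>l\<in>UNIV. W s i l * W t l j) = W (s + t) i j"
  unfolding W_def using G_add[OF bnd, of "\<i> * complex_of_real s" i "\<i> * complex_of_real t" j]
  by (simp add: distrib_left)

lemma W_cnj: "cnj (W t i j) = W (-t) i j"
  unfolding W_def by (simp add: G_cnj[OF bnd real])

lemma W_bound: "norm (W t i j) \<le> 1"
proof -
  have "(\<Sum>l\<in>UNIV. W t i l * W (-t) l i) = W 0 i i"
    using W_add[of t i "-t" i] by simp
  also have "\<dots> = 1" by (simp add: W_def G_zero)
  moreover have "W (-t) l i = cnj (W t i l)" for l
    using W_cnj[of t l i] G_sym[OF sym, of _ l i] by (simp add: W_def)
  ultimately have "(\<Sum>l\<in>UNIV. W t i l * cnj (W t i l)) = 1"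
    by simp
  then have "(\<Sum>l\<in>UNIV. complex_of_real ((norm (W t i l))\<^sup>2)) = 1"
    by (simp only: complex_norm_square)
  then have "(\<Sum>l\<in>UNIV. (norm (W t i l))\<^sup>2) = 1"
    by (simp only: of_real_sum[symmetric] of_real_eq_1_iff)
  moreover have "(norm (W t i j))\<^sup>2 \<le> (\<Sum>l\<in>UNIV. (norm (W t i l))\<^sup>2)"
    by (rule member_le_sum) simp_all
  ultimately have "(norm (W t i j))\<^sup>2 \<le> 1" by simp
  then show ?thesis using power2_le_imp_le[of "norm (W t i j)" 1] by simp
qed


lemma norm_vec_le_sum: "norm (x::'a::real_normed_vector^'m::finite) \<le> (\<Sum>i\<in>UNIV. norm (x $ i))"
  by (simp add: norm_vec_def L2_set_le_sum)

lemma W_near_id: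
  assumes e: "e > 0"
  shows "\<exists>m::real. m \<ge> N \<and> (\<forall>i j. norm (W m i j - W 0 i j) \<le> e)"
proof -
  let ?C = "real CARD('n)"
  define e' where "e' = e / (?C + 1)"
  have e'pos: "e' > 0" using e by (simp add: e'_def add_pos_pos)
  have Ce': "?C * e' \<le> e"
  proof -
    have "?C * e' = e * (?C / (?C + 1))" by (simp add: e'_def field_simps)
    also have "\<dots> \<le> e * 1" using e by (intro mult_left_mono) auto
    finally show ?thesis by simp
  qed
  define V :: "nat \<Rightarrow> complex^'n^'n" where "V n = (\<chi> i j. W (real n) i j)" for n
  have "norm (V n) \<le> ?C * ?C" for n
  proof -
    have "norm (V n) \<le> (\<Sum>i\<in>UNIV. norm (V n $ i))" by (rule norm_vec_le_sum)
    also have "\<dots> \<le> (\<Sum>i\<in>(UNIV::'n set). \<Sum>j\<in>(UNIV::'n set). norm (V n $ i $ j))"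
      by (intro sum_mono norm_vec_le_sum)
    also have "\<dots> \<le> (\<Sum>i\<in>(UNIV::'n set). \<Sum>j\<in>(UNIV::'n set). 1)"
      by (intro sum_mono) (simp add: V_def W_bound)
    also have "\<dots> = ?C * ?C" by simp
    finally show ?thesis .
  qed
  then have "bounded (range V)" unfolding bounded_iff by blast
  then obtain r L where r: "strict_mono r" and lim: "(V \<circ> r) \<longlonglongrightarrow> L"
    using bounded_imp_convergent_subsequence by blast
  have "Cauchy (V \<circ> r)" using lim by (rule LIMSEQ_imp_Cauchy)
  then obtain K where K: "\<forall>m\<ge>K. \<forall>n\<ge>K. norm ((V \<circ> r) m - (V \<circ> r) n) < e'"
    using CauchyD e'pos by blast
  define l where "l = max K (r K + nat \<lceil>N\<rceil>)"
  have "l \<le> r l" using seq_suble[OF r] by simp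
  then have rl: "r l \<ge> r K + nat \<lceil>N\<rceil>" unfolding l_def by simp
  define m where "m = real (r l) - real (r K)"
  have "m \<ge> real (nat \<lceil>N\<rceil>)" using rl unfolding m_def by simp
  then have mN: "m \<ge> N" using of_nat_ceiling[of N] by linarith
  have Kl: "norm (V (r l) - V (r K)) < e'" using K l_def by simp
  have D: "norm (W (real (r l)) i p - W (real (r K)) i p) < e'" for i p
  proof -
    have "norm (W (real (r l)) i p - W (real (r K)) i p) = norm ((V (r l) - V (r K)) $ i $ p)"
      by (simp add: V_def)
    also have "\<dots> \<le> norm ((V (r l) - V (r K)) $ i)" by (rule Finite_Cartesian_Product.norm_nth_le)
    also have "\<dots> \<le> norm (V (r l) - V (r K))" by (rule Finite_Cartesian_Product.norm_nth_le)
    finally show ?thesis using Kl by simp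
  qed
  have "norm (W m i j - W 0 i j) \<le> e" for i j
  proof -
    have "W m i j = (\<Sum>p\<in>UNIV. W (real (r l)) i p * W (- real (r K)) p j)"
      using W_add[of "real (r l)" i "- real (r K)" j] by (simp add: m_def)
    moreover have "W 0 i j = (\<Sum>p\<in>UNIV. W (real (r K)) i p * W (- real (r K)) p j)"
      using W_add[of "real (r K)" i "- real (r K)" j] by simp
    ultimately have "W m i j - W 0 i j
        = (\<Sum>p\<in>UNIV. (W (real (r l)) i p - W (real (r K)) i p) * W (- real (r K)) p j)"
      by (simp add: sum_subtractf left_diff_distrib)
    then have "norm (W m i j - W 0 i j)
        \<le> (\<Sum>p\<in>UNIV. norm ((W (real (r l)) i p - W (real (r K)) i p) * W (- real (r K)) p j))"
      by (simp add: norm_sum)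
    also have "\<dots> \<le> (\<Sum>p\<in>(UNIV::'n set). e')"
    proof (rule sum_mono)
      fix p
      have "norm ((W (real (r l)) i p - W (real (r K)) i p) * W (- real (r K)) p j)
          = norm (W (real (r l)) i p - W (real (r K)) i p) * norm (W (- real (r K)) p j)"
        by (rule norm_mult)
      also have "\<dots> \<le> e' * 1"
        using D[of i p] W_bound[of "- real (r K)" p j] e'pos
        by (intro mult_mono) auto
      finally show "norm ((W (real (r l)) i p - W (real (r K)) i p) * W (- real (r K)) p j) \<le> e'"
        by simp
    qed
    also have "\<dots> = ?C * e'" by simp
    finally show ?thesis using Ce' by simp
  qed
  then show ?thesis using mN by blast
qed

lemma cnj_in_closure: "cnj (W t a b) \<in> closure {W s a b | s. s \<ge> 0}"
  unfolding closure_approachable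
proof (intro allI impI)
  fix \<epsilon> :: real assume \<epsilon>: "\<epsilon> > 0"
  let ?C = "real CARD('n)"
  have epos: "\<epsilon> / (?C + 1) > 0" using \<epsilon> by (simp add: add_pos_pos)
  then obtain m where m: "m \<ge> \<bar>t\<bar>" and mb: "\<And>i j. norm (W m i j - W 0 i j) \<le> \<epsilon> / (?C + 1)"
    using W_near_id by blast
  have "W (m + - t) a b = (\<Sum>p\<in>UNIV. W m a p * W (- t) p b)"
    using W_add[of m a "-t" b] by simp
  moreover have "cnj (W t a b) = (\<Sum>p\<in>UNIV. W 0 a p * W (- t) p b)"
    using W_add[of 0 a "-t" b] by (simp add: W_cnj)
  ultimately have "W (m + - t) a b - cnj (W t a b) = (\<Sum>p\<in>UNIV. (W m a p - W 0 a p) * W (- t) p b)"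
    by (simp add: sum_subtractf left_diff_distrib)
  then have "dist (W (m + - t) a b) (cnj (W t a b)) \<le> (\<Sum>p\<in>UNIV. norm ((W m a p - W 0 a p) * W (- t) p b))"
    by (simp add: dist_norm norm_sum)
  also have "\<dots> \<le> (\<Sum>p\<in>(UNIV::'n set). \<epsilon> / (?C + 1))"
  proof (rule sum_mono)
    fix p
    have "norm ((W m a p - W 0 a p) * W (- t) p b) = norm (W m a p - W 0 a p) * norm (W (- t) p b)"
      by (rule norm_mult)
    also have "\<dots> \<le> \<epsilon> / (?C + 1) * 1"
      using mb[of a p] W_bound[of "-t" p b] epos by (intro mult_mono) auto
    finally show "norm ((W m a p - W 0 a p) * W (- t) p b) \<le> \<epsilon> / (?C + 1)" by simp
  qed
  also have "\<dots> = \<epsilon> * (?C / (?C + 1))" by simp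
  also have "\<dots> < \<epsilon> * 1" using \<epsilon> by (intro mult_strict_left_mono) auto
  finally have "dist (W (m + - t) a b) (cnj (W t a b)) < \<epsilon>" by simp
  moreover have "W (m + - t) a b \<in> {W s a b | s. s \<ge> 0}" using m by auto
  ultimately show "\<exists>y\<in>{W s a b | s. s \<ge> 0}. dist y (cnj (W t a b)) < \<epsilon>" by blast
qed

end

lemma closure_cnj_invariant:
  fixes S :: "complex set"
  assumes "cnj ` S \<subseteq> closure S"
  shows "cnj ` closure S = closure S"
proof -
  have inj: "inj cnj" by (rule injI) simp
  have eq: "cnj ` closure S = closure (cnj ` S)"
    by (rule closure_injective_linear_image[OF linear_cnj inj])
  have sub: "cnj ` closure S \<subseteq> closure S"
    unfolding eq using assms by (simp add: closure_minimal)
  have "closure S = cnj ` cnj ` closure S" by (simp add: image_image)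
  also have "\<dots> \<subseteq> cnj ` closure S" using sub by (rule image_mono)
  finally show ?thesis using sub by blast
qed

theorem corollary4p1:
  fixes E :: "'n::finite \<Rightarrow> 'n \<Rightarrow> bool" and a b :: 'n
  assumes "simple_graph E"
  shows "cnj ` closure {mat_exp (mat_scale (\<i> * complex_of_real t) (adj_matrix E)) $ a $ b | t. t \<ge> 0}
       = closure {mat_exp (mat_scale (\<i> * complex_of_real t) (adj_matrix E)) $ a $ b | t. t \<ge> 0}"
proof -
  interpret W_ctx "adj_matrix E"
    using assms by unfold_locales (auto simp: adj_matrix_def simple_graph_def)
  have S: "{mat_exp (mat_scale (\<i> * complex_of_real t) (adj_matrix E)) $ a $ b | t. t \<ge> 0}
      = {W s a b | s. s \<ge> 0}"
    by (simp add: mat_exp_G W_def)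
  show ?thesis unfolding S
    by (rule closure_cnj_invariant) (auto intro: cnj_in_closure)
qed

end
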